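(* Let $r=r(n)\ge 4$ be an integer-valued function with $r=o(n^{1/8})$ and let $n$ be sufficiently large. Let $A$ be an independent set in $G(n,r,1)$, and let $A_0$, $I_0$, $A_1$, $P$ and the notion "connected" be as defined in the context. Then no element $x\in[n]\setminus(I_0\cup P)$ is connected to two different vertices of $A_0$.
   Context: $G(n,r,1)$ is the graph on $[n]^{(r)}$ in which two $r$-subsets are adjacent iff they intersect in exactly one element; thus any two distinct members of an independent set $A$ are disjoint or share at least two elements. Let $A_0=\{v_1,\dots,v_k\}\subset A$ be a subfamily of pairwise disjoint sets of maximum possible cardinality, and $I_0=v_1\cup\dots\cup v_k$. Let $A_1$ be the set of $v\in A\setminus A_0$ that intersect exactly one of $v_1,\dots,v_k$. Let $\omega=\omega(r,n)=1$ if $r=4$ and $\omega=r^5\binom{n}{r-5}$ if $r\ge5$. An element $x\in[n]\setminus I_0$ is connected to $v_i$ if at least $\omega$ members of $A_1$ contain $x$ and intersect $v_i$. Two distinct elements $x,y$ are joint if every $v\in A_1$ satisfies $|v\cap\{x,y\}|\ne 1$. $P$ is the set of elements of $[n]\setminus I_0$ that are joint with some other element of $[n]\setminus I_0$. *)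

theory Defs
  imports Complex_Main "HOL-Library.Landau_Symbols"
begin

text \<open>Vertices of G(n,r,1): the r-subsets of [n] = {1..n}.\<close>
definition rsets :: "nat \<Rightarrow> nat \<Rightarrow> nat set set" where
  "rsets n r = {v. v \<subseteq> {1..n} \<and> card v = r}"

definition indep_Gnr1 :: "nat \<Rightarrow> nat \<Rightarrow> nat set set \<Rightarrow> bool" where
  "indep_Gnr1 n r A \<longleftrightarrow> A \<subseteq> rsets n r \<and>
     (\<forall>u\<in>A. \<forall>v\<in>A. u \<noteq> v \<longrightarrow> card (u \<inter> v) \<noteq> 1)"

definition pairwise_disjoint_fam :: "nat set set \<Rightarrow> bool" where
  "pairwise_disjoint_fam B \<longleftrightarrow> (\<forall>u\<in>B. \<forall>v\<in>B. u \<noteq> v \<longrightarrow> u \<inter> v = {})"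

definition max_disjoint_subfam :: "nat set set \<Rightarrow> nat set set \<Rightarrow> bool" where
  "max_disjoint_subfam A A0 \<longleftrightarrow> A0 \<subseteq> A \<and> pairwise_disjoint_fam A0 \<and>
     (\<forall>B. B \<subseteq> A \<and> pairwise_disjoint_fam B \<longrightarrow> card B \<le> card A0)"

definition A1_of :: "nat set set \<Rightarrow> nat set set \<Rightarrow> nat set set" where
  "A1_of A A0 = {v \<in> A - A0. card {u \<in> A0. u \<inter> v \<noteq> {}} = 1}"

definition omega :: "nat \<Rightarrow> nat \<Rightarrow> nat" where
  "omega r n = (if r = 4 then 1 else r ^ 5 * (n choose (r - 5)))"

definition connected_to :: "nat \<Rightarrow> nat \<Rightarrow> nat set set \<Rightarrow> nat set set \<Rightarrow> nat \<Rightarrow> nat set \<Rightarrow> bool" where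
  "connected_to n r A A0 x vi \<longleftrightarrow>
     x \<in> {1..n} - \<Union>A0 \<and>
     card {v \<in> A1_of A A0. x \<in> v \<and> v \<inter> vi \<noteq> {}} \<ge> omega r n"

definition joint :: "nat set set \<Rightarrow> nat set set \<Rightarrow> nat \<Rightarrow> nat \<Rightarrow> bool" where
  "joint A A0 x y \<longleftrightarrow> x \<noteq> y \<and> (\<forall>v \<in> A1_of A A0. card (v \<inter> {x, y}) \<noteq> 1)"

definition P_of :: "nat \<Rightarrow> nat set set \<Rightarrow> nat set set \<Rightarrow> nat set" where
  "P_of n A A0 = {x \<in> {1..n} - \<Union>A0. \<exists>y \<in> {1..n} - \<Union>A0. joint A A0 x y}"

end

theory Submission
  imports Defs
begin

lemma rsets_fin: "finite (rsets n r)"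
proof -
  have "rsets n r \<subseteq> Pow {1..n}" unfolding rsets_def by auto
  thus ?thesis by (rule finite_subset) auto
qed

lemma rsets_props: "t \<in> rsets n r \<Longrightarrow> finite t \<and> card t = r \<and> t \<subseteq> {1..n}"
  unfolding rsets_def using finite_subset[of t "{1..n}"] by auto

lemma A1_unique:
  assumes "v \<in> A1_of A A0" "u \<in> A0" "w \<in> A0" "v \<inter> u \<noteq> {}" "v \<inter> w \<noteq> {}"
  shows "u = w"
proof -
  have "card {z \<in> A0. z \<inter> v \<noteq> {}} = 1" using assms(1) unfolding A1_of_def by auto
  then obtain z where z: "{z \<in> A0. z \<inter> v \<noteq> {}} = {z}" by (auto simp: card_1_singleton_iff)
  have "u \<in> {z \<in> A0. z \<inter> v \<noteq> {}}" "w \<in> {z \<in> A0. z \<inter> v \<noteq> {}}" using assms by auto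
  thus ?thesis using z by auto
qed

lemma indep_ge2:
  assumes "indep_Gnr1 n r A" "s \<in> A" "t \<in> A" "s \<noteq> t" "s \<inter> t \<noteq> {}"
  shows "card (s \<inter> t) \<ge> 2"
proof -
  have "s \<subseteq> {1..n}" using assms(1,2) unfolding indep_Gnr1_def rsets_def by auto
  hence "finite (s \<inter> t)" by (meson finite_Int finite_atLeastAtMost finite_subset)
  hence "card (s \<inter> t) \<noteq> 0" using assms(5) by auto
  moreover have "card (s \<inter> t) \<noteq> 1" using assms unfolding indep_Gnr1_def by auto
  ultimately show ?thesis by linarith
qed

lemma count_lemma:
  assumes "finite K" "card K = 5"
  shows "card {t \<in> rsets n r. K \<subseteq> t} \<le> (if r \<ge> 5 then n choose (r-5) else 0)"
proof (cases "r \<ge> 5")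
  case False
  have "{t \<in> rsets n r. K \<subseteq> t} = {}"
  proof (rule ccontr)
    assume "{t \<in> rsets n r. K \<subseteq> t} \<noteq> {}"
    then obtain t where t: "t \<in> rsets n r" "K \<subseteq> t" by auto
    have "finite t" "card t = r" using t(1) unfolding rsets_def
      by (auto intro: finite_subset)
    hence "card K \<le> r" using t(2) card_mono by metis
    thus False using False assms by simp
  qed
  thus ?thesis by (metis card.empty le0)
next
  case True
  let ?S = "{t \<in> rsets n r. K \<subseteq> t}"
  have inj: "inj_on (\<lambda>t. t - K) ?S"
    by (rule inj_onI) (metis (no_types, lifting) Diff_partition mem_Collect_eq)
  have img: "(\<lambda>t. t - K) ` ?S \<subseteq> {B. B \<subseteq> {1..n} \<and> card B = r - 5}"
  proof
    fix B assume "B \<in> (\<lambda>t. t - K) ` ?S"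
    then obtain t where t: "t \<in> rsets n r" "K \<subseteq> t" "B = t - K" by auto
    have "finite t" "card t = r" "t \<subseteq> {1..n}" using t(1) unfolding rsets_def
      by (auto intro: finite_subset)
    thus "B \<in> {B. B \<subseteq> {1..n} \<and> card B = r - 5}"
      using t assms by (auto simp: card_Diff_subset)
  qed
  have "card ?S = card ((\<lambda>t. t - K) ` ?S)" using inj by (simp add: card_image)
  also have "\<dots> \<le> card {B. B \<subseteq> {1..n} \<and> card B = r - 5}"
    by (rule card_mono[OF _ img]) auto
  also have "\<dots> = n choose (r - 5)" using n_subsets[of "{1..n}" "r-5"] by simp
  finally show ?thesis using True by simp
qed

lemma card_UN_bound:
  assumes "finite I" "\<And>i. i \<in> I \<Longrightarrow> card (G i) \<le> (K::nat)" "card I \<le> m"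
  shows "card (\<Union>i\<in>I. G i) \<le> m * K"
proof -
  have "card (\<Union>i\<in>I. G i) \<le> (\<Sum>i\<in>I. card (G i))" by (rule card_UN_le[OF assms(1)])
  also have "\<dots> \<le> card I * K" using sum_bounded_above[of I "\<lambda>i. card (G i)" K] assms(2) by simp
  also have "\<dots> \<le> m * K" using assms(3) by simp
  finally show ?thesis .
qed

lemma Ty_bound:
  assumes ind: "indep_Gnr1 n r A" and A0A: "A0 \<subseteq> A" and xA0: "x \<notin> \<Union>A0"
    and u: "u \<in> A0" and yu: "y \<notin> u" and xy: "x \<noteq> y"
    and s: "s \<in> A1_of A A0" and sxy: "card (s \<inter> {x, y}) = 1" and su: "s \<inter> u = {}"
  shows "card {v \<in> A1_of A A0. x \<in> v \<and> v \<inter> u \<noteq> {} \<and> y \<in> v}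
          \<le> r * (r * (r * (if r \<ge> 5 then n choose (r-5) else 0)))"
proof -
  define M where "M = (if r \<ge> 5 then n choose (r-5) else 0)"
  define F where "F c a b = {t \<in> rsets n r. {x, y, c, a, b} \<subseteq> t}" for c a b
  have Ars: "A \<subseteq> rsets n r" using ind unfolding indep_Gnr1_def by auto
  have sA: "s \<in> A" using s unfolding A1_of_def by auto
  have uA: "u \<in> A" using u A0A by auto
  have fins: "finite s" "card s = r" using sA Ars rsets_props by blast+
  have finu: "finite u" "card u = r" using uA Ars rsets_props by blast+
  have xu: "x \<notin> u" using xA0 u by auto
  have sub: "{v \<in> A1_of A A0. x \<in> v \<and> v \<inter> u \<noteq> {} \<and> y \<in> v}
       \<subseteq> (\<Union>c\<in>s-{x,y}. \<Union>a\<in>u. \<Union>b\<in>u-{a}. F c a b)"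
  proof
    fix t assume "t \<in> {v \<in> A1_of A A0. x \<in> v \<and> v \<inter> u \<noteq> {} \<and> y \<in> v}"
    hence t: "t \<in> A1_of A A0" "x \<in> t" "t \<inter> u \<noteq> {}" "y \<in> t" by blast+
    have tA: "t \<in> A" "t \<notin> A0" using t(1) unfolding A1_of_def by auto
    have st: "s \<noteq> t"
    proof
      assume "s = t" hence "s \<inter> {x,y} = {x,y}" using t by auto
      hence "card (s \<inter> {x,y}) = 2" using xy by simp
      thus False using sxy by simp
    qed
    have "s \<inter> {x,y} \<noteq> {}" using sxy by (metis card.empty zero_neq_one)
    moreover have "s \<inter> {x,y} \<subseteq> s \<inter> t" using t by auto
    ultimately have "s \<inter> t \<noteq> {}" by auto
    hence c2: "card (s \<inter> t) \<ge> 2" using indep_ge2[OF ind sA tA(1) st] by simp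
    have "\<exists>c \<in> s \<inter> t. c \<notin> {x, y}"
    proof (rule ccontr)
      assume "\<not> ?thesis"
      hence "s \<inter> t \<subseteq> s \<inter> {x, y}" by auto
      hence "card (s \<inter> t) \<le> card (s \<inter> {x,y})" by (intro card_mono) auto
      thus False using c2 sxy by simp
    qed
    then obtain c where c: "c \<in> s" "c \<in> t" "c \<notin> {x,y}" by auto
    have ut: "u \<noteq> t" using u tA(2) by blast
    have c2': "card (u \<inter> t) \<ge> 2" using indep_ge2[OF ind uA tA(1) ut] t(3) by (simp add: Int_commute)
    have fut: "finite (u \<inter> t)" using finu(1) by simp
    have "\<not> card (u \<inter> t) \<le> Suc 0" using c2' by simp
    hence "\<not> (\<forall>a\<in>u \<inter> t. \<forall>b\<in>u \<inter> t. a = b)" using card_le_Suc0_iff_eq[OF fut] by simp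
    then obtain a b where ab: "a \<in> u \<inter> t" "b \<in> u \<inter> t" "a \<noteq> b" by blast
    have "t \<in> rsets n r" using tA(1) Ars by blast
    hence "t \<in> F c a b" using c ab t unfolding F_def by auto
    thus "t \<in> (\<Union>c\<in>s-{x,y}. \<Union>a\<in>u. \<Union>b\<in>u-{a}. F c a b)" using c ab by blast
  qed
  have Fb: "card (F c a b) \<le> M" if "c \<in> s - {x,y}" "a \<in> u" "b \<in> u - {a}" for c a b
  proof -
    have "c \<notin> u" using that su by auto
    have d: "c \<noteq> x" "c \<noteq> y" "a \<noteq> b" "a \<noteq> x" "a \<noteq> y" "a \<noteq> c" "b \<noteq> x" "b \<noteq> y" "b \<noteq> c"
      using that xu yu \<open>c \<notin> u\<close> by auto
    hence "card {x, y, c, a, b} = 5" using xy by simp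
    thus ?thesis unfolding F_def M_def by (intro count_lemma) auto
  qed
  have "card (\<Union>c\<in>s-{x,y}. \<Union>a\<in>u. \<Union>b\<in>u-{a}. F c a b) \<le> r * (r * (r * M))"
  proof (rule card_UN_bound)
    show "finite (s - {x,y})" using fins by auto
    show "card (s - {x, y}) \<le> r" using fins card_mono[OF fins(1), of "s - {x,y}"] by auto
    fix c assume c: "c \<in> s - {x,y}"
    show "card (\<Union>a\<in>u. \<Union>b\<in>u-{a}. F c a b) \<le> r * (r * M)"
    proof (rule card_UN_bound)
      show "finite u" "card u \<le> r" using finu by auto
      fix a assume a: "a \<in> u"
      show "card (\<Union>b\<in>u-{a}. F c a b) \<le> r * M"
      proof (rule card_UN_bound)
        show "finite (u - {a})" using finu by simp
        show "card (u - {a}) \<le> r" using finu by (metis card_Diff1_le)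
        fix b assume "b \<in> u - {a}"
        thus "card (F c a b) \<le> M" using Fb c a by blast
      qed
    qed
  qed
  moreover have "finite (\<Union>c\<in>s-{x,y}. \<Union>a\<in>u. \<Union>b\<in>u-{a}. F c a b)"
    by (rule finite_subset[OF _ rsets_fin[of n r]]) (auto simp: F_def)
  ultimately show ?thesis using card_mono[OF _ sub] unfolding M_def by (meson le_trans)
qed


lemma card_incidence:
  assumes "finite T" "finite Y" "\<And>v. v \<in> T \<Longrightarrow> finite v \<and> card v = r"
  shows "(\<Sum>y\<in>Y. card {v \<in> T. y \<in> v}) \<le> r * card T"
proof -
  have "(\<Sum>y\<in>Y. card {v \<in> T. y \<in> v}) = (\<Sum>y\<in>Y. \<Sum>v\<in>{v \<in> T. y \<in> v}. (1::nat))" by simp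
  also have "\<dots> = (\<Sum>v\<in>T. \<Sum>y\<in>{y \<in> Y. y \<in> v}. (1::nat))"
    by (rule sum.swap_restrict[OF assms(2,1)])
  also have "\<dots> = (\<Sum>v\<in>T. card {y \<in> Y. y \<in> v})" by simp
  also have "\<dots> \<le> (\<Sum>v\<in>T. r)"
  proof (rule sum_mono)
    fix v assume "v \<in> T"
    hence "finite v" "card v = r" using assms(3) by auto
    thus "card {y \<in> Y. y \<in> v} \<le> r" using card_mono[of v "{y \<in> Y. y \<in> v}"] by auto
  qed
  also have "\<dots> = r * card T" by simp
  finally show ?thesis .
qed

lemma main_lemma:
  fixes n r :: nat
  assumes r4: "r \<ge> 4" and ind: "indep_Gnr1 n r A" and A0A: "A0 \<subseteq> A"
    and xn: "x \<in> {1..n}" and xA0: "x \<notin> \<Union>A0" and xP: "x \<notin> P_of n A A0"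
    and u: "u \<in> A0" and w: "w \<in> A0" and uw: "u \<noteq> w"
    and cu: "connected_to n r A A0 x u" and cw: "connected_to n r A A0 x w"
  shows False
proof -
  define A1 where "A1 = A1_of A A0"
  define T where "T z = {v \<in> A1. x \<in> v \<and> v \<inter> z \<noteq> {}}" for z
  define Ty where "Ty z y = {v \<in> T z. y \<in> v}" for z y
  define M where "M = (if r \<ge> 5 then n choose (r-5) else 0)"
  define B where "B = r * (r * (r * M))"
  define Y where "Y = {1..n} - \<Union>A0 - {x}"
  have Ars: "A \<subseteq> rsets n r" using ind unfolding indep_Gnr1_def by auto
  have A1A: "A1 \<subseteq> A" unfolding A1_def A1_of_def by auto
  have finA1: "finite A1" using A1A Ars rsets_fin finite_subset by metis
  have finT: "finite (T z)" for z unfolding T_def using finA1 by simp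
  have finY: "finite Y" unfolding Y_def by simp
  have Tprops: "v \<in> T z \<Longrightarrow> finite v \<and> card v = r" for v z
    unfolding T_def using A1A Ars rsets_props by blast
  have a: "card (T u) \<ge> omega r n" using cu unfolding connected_to_def T_def A1_def by simp
  have b: "card (T w) \<ge> omega r n" using cw unfolding connected_to_def T_def A1_def by simp
  have sep: "card (Ty u y) \<le> B \<or> card (Ty w y) \<le> B" if y: "y \<in> Y" for y
  proof -
    have yO: "y \<in> {1..n} - \<Union>A0" "y \<noteq> x" using y unfolding Y_def by auto
    have "\<not> joint A A0 x y" using xP xn xA0 yO(1) unfolding P_of_def by blast
    then obtain s where s: "s \<in> A1_of A A0" "card (s \<inter> {x, y}) = 1"
      using yO(2) unfolding joint_def by auto
    have eq: "Ty z y = {v \<in> A1_of A A0. x \<in> v \<and> v \<inter> z \<noteq> {} \<and> y \<in> v}" for z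
      unfolding Ty_def T_def A1_def by auto
    show ?thesis
    proof (cases "s \<inter> u = {}")
      case True
      have "y \<notin> u" using yO u by auto
      from Ty_bound[OF ind A0A xA0 u this yO(2)[symmetric] s True] show ?thesis
        unfolding eq B_def M_def by simp
    next
      case False
      have "s \<inter> w = {}" using A1_unique[OF s(1) u w False] uw by auto
      moreover have "y \<notin> w" using yO w by auto
      ultimately show ?thesis using Ty_bound[OF ind A0A xA0 w _ yO(2)[symmetric] s]
        unfolding eq B_def M_def by simp
    qed
  qed
  have cover: "T u \<times> T w \<subseteq> (\<Union>y\<in>Y. Ty u y \<times> Ty w y)"
  proof
    fix p assume "p \<in> T u \<times> T w"
    then obtain t t' where p: "p = (t, t')" "t \<in> T u" "t' \<in> T w" by auto
    have t: "t \<in> A1" "x \<in> t" "t \<inter> u \<noteq> {}" using p unfolding T_def by auto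
    have t': "t' \<in> A1" "x \<in> t'" "t' \<inter> w \<noteq> {}" using p unfolding T_def by auto
    have t'u: "t' \<inter> u = {}" using A1_unique[of t' A A0 u w] t' u w uw unfolding A1_def by auto
    have tt: "t \<noteq> t'" using t(3) t'u by auto
    have "card (t \<inter> t') \<ge> 2" using indep_ge2[OF ind _ _ tt] t t' A1A by auto
    moreover have "finite (t \<inter> t')" using Tprops p by auto
    ultimately obtain y where yy: "y \<in> t \<inter> t'" "y \<noteq> x"
      using card_le_Suc0_iff_eq[of "t \<inter> t'"] by (metis One_nat_def not_less_eq_eq numeral_2_eq_2)
    have "y \<in> {1..n}" using yy p(2) t(1) A1A Ars rsets_props by blast
    moreover have "y \<notin> \<Union>A0"
    proof
      assume "y \<in> \<Union>A0"
      then obtain v where v: "v \<in> A0" "y \<in> v" by auto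
      have "v = u" using A1_unique[of t A A0 v u] t v yy u unfolding A1_def by auto
      moreover have "v = w" using A1_unique[of t' A A0 v w] t' v yy w unfolding A1_def by auto
      ultimately show False using uw by simp
    qed
    ultimately have "y \<in> Y" using yy unfolding Y_def by auto
    moreover have "p \<in> Ty u y \<times> Ty w y" using p yy unfolding Ty_def by auto
    ultimately show "p \<in> (\<Union>y\<in>Y. Ty u y \<times> Ty w y)" by blast
  qed
  have "card (T u) * card (T w) = card (T u \<times> T w)" by (simp add: card_cartesian_product)
  also have "\<dots> \<le> card (\<Union>y\<in>Y. Ty u y \<times> Ty w y)"
    by (rule card_mono[OF _ cover]) (use finY finT in \<open>auto simp: Ty_def\<close>)
  also have "\<dots> \<le> (\<Sum>y\<in>Y. card (Ty u y \<times> Ty w y))" by (rule card_UN_le[OF finY])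
  also have "\<dots> = (\<Sum>y\<in>Y. card (Ty u y) * card (Ty w y))" by (simp add: card_cartesian_product)
  also have "\<dots> \<le> (\<Sum>y\<in>Y. B * (card (Ty u y) + card (Ty w y)))"
  proof (rule sum_mono)
    fix y assume "y \<in> Y"
    from sep[OF this] show "card (Ty u y) * card (Ty w y) \<le> B * (card (Ty u y) + card (Ty w y))"
    proof
      assume h: "card (Ty u y) \<le> B"
      have "card (Ty u y) * card (Ty w y) \<le> B * card (Ty w y)" by (rule mult_le_mono1[OF h])
      moreover have "B * (card (Ty u y) + card (Ty w y)) = B * card (Ty u y) + B * card (Ty w y)"
        by (rule add_mult_distrib2)
      ultimately show ?thesis by linarith
    next
      assume h: "card (Ty w y) \<le> B"
      have "card (Ty w y) * card (Ty u y) \<le> B * card (Ty u y)" by (rule mult_le_mono1[OF h])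
      moreover have "B * (card (Ty u y) + card (Ty w y)) = B * card (Ty u y) + B * card (Ty w y)"
        by (rule add_mult_distrib2)
      ultimately show ?thesis by (simp only: mult.commute[of "card (Ty u y)"])
    qed
  qed
  also have "\<dots> = B * ((\<Sum>y\<in>Y. card (Ty u y)) + (\<Sum>y\<in>Y. card (Ty w y)))"
    by (simp only: sum_distrib_left[symmetric] sum.distrib)
  also have "\<dots> \<le> B * (r * card (T u) + r * card (T w))"
  proof -
    have "(\<Sum>y\<in>Y. card (Ty z y)) \<le> r * card (T z)" for z
      unfolding Ty_def by (rule card_incidence[OF finT finY Tprops])
    thus ?thesis by (simp add: add_mono)
  qed
  finally have ineq: "card (T u) * card (T w) \<le> B * (r * card (T u) + r * card (T w))" .
  have uA: "u \<in> rsets n r" using u A0A Ars by auto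
  hence rn: "r \<le> n" using rsets_props[OF uA] card_mono[of "{1..n}" u] by auto
  have om: "2 * (B * r) < omega r n"
  proof (cases "r = 4")
    case True thus ?thesis unfolding B_def M_def omega_def by simp
  next
    case False
    hence r5: "r \<ge> 5" using r4 by simp
    have Mpos: "M > 0" unfolding M_def using r5 rn by simp
    have "omega r n = r ^ 5 * M" unfolding omega_def M_def using False r5 by simp
    moreover have "2 * (B * r) = 2 * (r ^ 4 * M)" unfolding B_def by (simp add: eval_nat_numeral mult.assoc)
    moreover have "2 * (r ^ 4 * M) < r ^ 5 * M"
    proof -
      have "r ^ 4 * M > 0" using Mpos r5 by simp
      hence "2 * (r ^ 4 * M) < r * (r ^ 4 * M)" using r5 by simp
      thus ?thesis by (simp add: eval_nat_numeral mult.assoc)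
    qed
    ultimately show ?thesis by simp
  qed
  define p where "p = card (T u)"
  define q where "q = card (T w)"
  have pq: "p * q \<le> B * r * (p + q)" using ineq unfolding p_def q_def by (simp add: algebra_simps)
  have "omega r n \<le> p" "omega r n \<le> q" using a b unfolding p_def q_def by auto
  show False
  proof (cases "p \<le> q")
    case True
    have "p + q \<le> 2 * q" using True by simp
    hence "B * r * (p + q) \<le> B * r * (2 * q)" by (rule mult_le_mono2)
    hence "p * q \<le> B * r * (2 * q)" using pq by (rule le_trans[rotated])
    hence "p * q \<le> (2 * (B * r)) * q" by (simp add: algebra_simps)
    moreover have "q > 0" using om \<open>omega r n \<le> q\<close> by linarith
    ultimately have "p \<le> 2 * (B * r)" by simp
    thus False using om \<open>omega r n \<le> p\<close> by linarith
  next
    case False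
    have "p + q \<le> 2 * p" using False by simp
    hence "B * r * (p + q) \<le> B * r * (2 * p)" by (rule mult_le_mono2)
    hence "p * q \<le> B * r * (2 * p)" using pq by (rule le_trans[rotated])
    hence "q * p \<le> (2 * (B * r)) * p" by (simp add: algebra_simps)
    moreover have "p > 0" using om \<open>omega r n \<le> p\<close> by linarith
    ultimately have "q \<le> 2 * (B * r)" by simp
    thus False using om \<open>omega r n \<le> q\<close> by linarith
  qed
qed

theorem lemma2:
  fixes r :: "nat \<Rightarrow> nat"
  assumes "\<And>n. r n \<ge> 4"
    and "(\<lambda>n. real (r n)) \<in> o(\<lambda>n. real n powr (1/8))"
  shows "\<exists>N. \<forall>n\<ge>N. \<forall>A A0. indep_Gnr1 n (r n) A \<and> max_disjoint_subfam A A0 \<longrightarrow>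
           (\<forall>x \<in> {1..n} - (\<Union>A0 \<union> P_of n A A0).
              \<not> (\<exists>u\<in>A0. \<exists>w\<in>A0. u \<noteq> w \<and>
                    connected_to n (r n) A A0 x u \<and> connected_to n (r n) A A0 x w))"
proof (intro exI allI impI ballI notI)
  fix n A A0 x
  assume h: "indep_Gnr1 n (r n) A \<and> max_disjoint_subfam A A0"
    and x: "x \<in> {1..n} - (\<Union>A0 \<union> P_of n A A0)"
    and c: "\<exists>u\<in>A0. \<exists>w\<in>A0. u \<noteq> w \<and> connected_to n (r n) A A0 x u \<and> connected_to n (r n) A A0 x w"
  from c obtain u w where uw: "u \<in> A0" "w \<in> A0" "u \<noteq> w"
    "connected_to n (r n) A A0 x u" "connected_to n (r n) A A0 x w" by blast
  have "A0 \<subseteq> A" using h unfolding max_disjoint_subfam_def by auto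
  from main_lemma[OF assms(1) _ this _ _ _ uw] h x show False by auto
qed

end
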